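(* Let $\ell$ be a prime and let $R,S,T$ be pairwise coprime positive integers. Let $S'=\prod_{q:\ \operatorname{ord}_q(S)\text{ odd}} q$, let $v$ be the positive integer with $SS'=v^2$, let $u=RS'$, and write $TS'=mn^2$ with $m$ a squarefree positive integer and $n$ a positive integer. Let $K=\mathbb{Q}(\sqrt{-m})$ with ring of integers $\mathcal{O}$, and let $\epsilon\in K^*$ be a representative of an element of $\mathcal{E}$. Let $q=2k\ell+1$ be a prime ($k$ a positive integer) such that $q\mathcal{O}=\mathfrak{q}_1\mathfrak{q}_2$ with $\mathfrak{q}_1\neq\mathfrak{q}_2$ and $\operatorname{ord}_{\mathfrak{q}_j}(\epsilon)=0$ for $j=1,2$. Let $\chi(\ell,q)=\{\eta^\ell:\eta\in\mathbb{F}_q\}$ and let $C(\ell,q)$ be the set of $\zeta\in\chi(\ell,q)$ such that, for each $j=1,2$, $\big((v\zeta+n\sqrt{-m})/\epsilon\big)^{2k}\equiv 0$ or $1\pmod{\mathfrak{q}_j}$ (where $\zeta$ is regarded as an element of $\mathcal{O}/\mathfrak{q}_j\cong\mathbb{F}_q$). If $C(\ell,q)=\emptyset$, then there are no $\sigma\in\mathbb{Z}$ and $\eta\in K$ satisfying \[ v\sigma^\ell+n\sqrt{-m}=\epsilon\eta^\ell . \]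
   Context: Let $\mathfrak{S}$ be the set of prime ideals of $\mathcal{O}$ dividing $u$ or $2n\sqrt{-m}$. The $\ell$-Selmer group is $K(\mathfrak{S},\ell)=\{\epsilon\in K^*/K^{*\ell}:\operatorname{ord}_{\mathfrak P}(\epsilon)\equiv 0\pmod\ell \text{ for all prime ideals }\mathfrak P\notin\mathfrak{S}\}$, and $\mathcal{E}=\{\epsilon\in K(\mathfrak{S},\ell): \operatorname{Norm}(\epsilon)/u\in\mathbb{Q}^{*\ell}\}$. *)

theory Defs
  imports Complex_Main "HOL-Computational_Algebra.Polynomial"
    "HOL-Computational_Algebra.Squarefree" "HOL-Algebra.Ideal_Product"
begin

(* The imaginary quadratic field K = Q(sqrt(-m)) is realised inside the complex numbers. *)

definition sqrt_neg :: "nat \<Rightarrow> complex" where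
  "sqrt_neg m = \<i> * complex_of_real (sqrt (real m))"

definition QF :: "nat \<Rightarrow> complex set" where
  "QF m = {complex_of_real (of_rat a) + complex_of_real (of_rat b) * sqrt_neg m | a b. True}"

definition OK :: "nat \<Rightarrow> complex set" where
  "OK m = {z \<in> QF m. algebraic_int z}"

definition OK_ring :: "nat \<Rightarrow> complex ring" where
  "OK_ring m = \<lparr>carrier = OK m, mult = (*), one = 1, zero = 0, add = (+)\<rparr>"

definition prime_ideal_OK :: "nat \<Rightarrow> complex set \<Rightarrow> bool" where
  "prime_ideal_OK m P \<longleftrightarrow> primeideal P (OK_ring m) \<and> P \<noteq> {0}"

fun ideal_pow :: "nat \<Rightarrow> complex set \<Rightarrow> nat \<Rightarrow> complex set" where
  "ideal_pow m P 0 = OK m"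
| "ideal_pow m P (Suc e) = ideal_prod (OK_ring m) P (ideal_pow m P e)"

definition ordO :: "nat \<Rightarrow> complex set \<Rightarrow> complex \<Rightarrow> nat" where
  "ordO m P a = (GREATEST e. a \<in> ideal_pow m P e)"

definition ordK :: "nat \<Rightarrow> complex set \<Rightarrow> complex \<Rightarrow> int" where
  "ordK m P x = (SOME e. \<exists>a b. a \<in> OK m - {0} \<and> b \<in> OK m - {0} \<and> x = a / b
                     \<and> e = int (ordO m P a) - int (ordO m P b))"

definition congP :: "nat \<Rightarrow> complex set \<Rightarrow> complex \<Rightarrow> complex \<Rightarrow> bool" where
  "congP m P x y \<longleftrightarrow> x = y \<or> ordK m P (x - y) \<ge> 1"

definition normK :: "complex \<Rightarrow> real" where
  "normK z = Re (z * cnj z)"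

definition Sset :: "nat \<Rightarrow> nat \<Rightarrow> nat \<Rightarrow> complex set set" where
  "Sset m n u = {P. prime_ideal_OK m P \<and>
      (complex_of_nat u \<in> P \<or> 2 * complex_of_nat n * sqrt_neg m \<in> P)}"

(* eps is a representative in K^* of an element of \<E> \<subseteq> K(\<frak>S, l) *)
definition in_E :: "nat \<Rightarrow> nat \<Rightarrow> nat \<Rightarrow> nat \<Rightarrow> complex \<Rightarrow> bool" where
  "in_E l m n u eps \<longleftrightarrow> eps \<in> QF m \<and> eps \<noteq> 0 \<and>
     (\<forall>P. prime_ideal_OK m P \<and> P \<notin> Sset m n u \<longrightarrow> int l dvd ordK m P eps) \<and>
     (\<exists>r::rat. r \<noteq> 0 \<and> normK eps / real u = of_rat (r ^ l))"

definition Sprime :: "nat \<Rightarrow> nat" where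
  "Sprime S = (\<Prod>p\<in>{p \<in> prime_factors S. odd (multiplicity p S)}. p)"

(* chi(l,q) = l-th powers in F_q, with F_q = {0..q-1} *)
definition chi :: "nat \<Rightarrow> nat \<Rightarrow> nat set" where
  "chi l q = {(e ^ l) mod q | e. e < q}"

(* C(l,q); the residue zeta is lifted to the integer zeta in {0..q-1} *)
definition Cset :: "nat \<Rightarrow> nat \<Rightarrow> nat \<Rightarrow> nat \<Rightarrow> nat \<Rightarrow> nat \<Rightarrow> complex \<Rightarrow> complex set \<Rightarrow> complex set \<Rightarrow> nat set" where
  "Cset l q k m n v eps q1 q2 = {\<zeta> \<in> chi l q. \<forall>Q \<in> {q1, q2}.
      congP m Q (((complex_of_nat v * complex_of_nat \<zeta> + complex_of_nat n * sqrt_neg m) / eps) ^ (2 * k)) 0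
    \<or> congP m Q (((complex_of_nat v * complex_of_nat \<zeta> + complex_of_nat n * sqrt_neg m) / eps) ^ (2 * k)) 1}"

end

theory Submission imports Defs "HOL-Number_Theory.Number_Theory" begin

lemma cR_of: "complex_of_real (of_rat a) = of_rat a"
  by (cases a) (simp add: of_rat_rat)


lemma sqrt_neg_sq: "sqrt_neg m ^ 2 = - of_nat m"
  unfolding sqrt_neg_def by (simp add: power_mult_distrib flip: of_real_power)

lemma ss[simp]: "sqrt_neg m * (sqrt_neg m * z) = - of_nat m * z"
  using sqrt_neg_sq[of m] by (simp add: power2_eq_square flip: mult.assoc)

lemma ss'[simp]: "sqrt_neg m * sqrt_neg m = - of_nat m"
  using sqrt_neg_sq[of m] by (simp add: power2_eq_square)

lemma sqrt_neg_cnj: "cnj (sqrt_neg m) = - sqrt_neg m"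
  unfolding sqrt_neg_def by simp

lemma QF_iff: "x \<in> QF m \<longleftrightarrow> (\<exists>a b. x = of_rat a + of_rat b * sqrt_neg m)"
  unfolding QF_def by (auto simp: cR_of)

lemma QF_I: "x = of_rat a + of_rat b * sqrt_neg m \<Longrightarrow> x \<in> QF m"
  unfolding QF_iff by blast

lemma QF_add: assumes "x \<in> QF m" "y \<in> QF m" shows "x + y \<in> QF m"
proof -
  obtain a b where x: "x = of_rat a + of_rat b * sqrt_neg m" using assms(1) unfolding QF_iff by blast
  obtain c d where y: "y = of_rat c + of_rat d * sqrt_neg m" using assms(2) unfolding QF_iff by blast
  show ?thesis by (rule QF_I[of _ "a+c" "b+d"]) (simp add: x y of_rat_add algebra_simps)
qed

lemma QF_minus: "x \<in> QF m \<Longrightarrow> - x \<in> QF m"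
  unfolding QF_iff
  apply (elim exE)
  subgoal for a b by (rule exI[of _ "-a"], rule exI[of _ "-b"]) (simp add: of_rat_minus algebra_simps)
  done

lemma QF_diff: "x \<in> QF m \<Longrightarrow> y \<in> QF m \<Longrightarrow> x - y \<in> QF m"
  using QF_add[of x m "-y"] QF_minus[of y m] by simp

lemma QF_mult: assumes "x \<in> QF m" "y \<in> QF m" shows "x * y \<in> QF m"
proof -
  obtain a b where x: "x = of_rat a + of_rat b * sqrt_neg m" using assms(1) unfolding QF_iff by blast
  obtain c d where y: "y = of_rat c + of_rat d * sqrt_neg m" using assms(2) unfolding QF_iff by blast
  have "sqrt_neg m * sqrt_neg m = - of_nat m" using sqrt_neg_sq[of m] by (simp add: power2_eq_square)
  then show ?thesis 
    by (intro QF_I[of _ "a*c - of_nat m * b * d" "a*d+b*c"]) (simp add: x y of_rat_add of_rat_mult of_rat_diff algebra_simps)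
qed

lemma QF_rat: "of_rat a \<in> QF m"
  by (rule QF_I[of _ a 0]) simp

lemma QF_int: "of_int a \<in> QF m"
  using QF_rat[of "of_int a" m] by simp

lemma QF_nat: "of_nat a \<in> QF m"
  using QF_int[of "int a" m] by simp

lemma QF_s: "sqrt_neg m \<in> QF m"
  by (rule QF_I[of _ 0 1]) simp

lemma QF_cnj: "x \<in> QF m \<Longrightarrow> cnj x \<in> QF m"
  unfolding QF_iff
  apply (elim exE)
  subgoal for a b by (rule exI[of _ "a"], rule exI[of _ "-b"]) (simp add: sqrt_neg_cnj of_rat_minus flip: cR_of)
  done

lemma QF_power: "x \<in> QF m \<Longrightarrow> x ^ n \<in> QF m"
  by (induction n) (auto simp: QF_mult QF_int[of 1, simplified])

lemma norm_rat: "x \<in> QF m \<Longrightarrow> \<exists>a b. x * cnj x = of_rat (a*a + of_nat m * b * b) \<and> x = of_rat a + of_rat b * sqrt_neg m"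
  unfolding QF_iff
  apply (elim exE)
  subgoal for a b
    apply (rule exI[of _ a], rule exI[of _ b])
    using sqrt_neg_sq[of m]
    by (simp add: sqrt_neg_cnj of_rat_add of_rat_mult algebra_simps power2_eq_square flip: cR_of)
  done

lemma QF_inverse: assumes "x \<in> QF m" shows "inverse x \<in> QF m"
proof (cases "x = 0")
  case True then show ?thesis using QF_int[of 0 m] by simp
next
  case False
  from norm_rat[OF assms] obtain a b where ab: "x * cnj x = of_rat (a*a + of_nat m * b * b)" by blast
  have "x * cnj x \<noteq> 0" using False by simp
  have "inverse x = cnj x * inverse (x * cnj x)"
    using False by (simp add: field_simps)
  also have "\<dots> = cnj x * of_rat (inverse (a*a + of_nat m * b * b))"
    using ab by (simp add: of_rat_inverse)
  finally have "inverse x = cnj x * of_rat (inverse (a*a + of_nat m * b * b))" .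
  then show ?thesis using QF_mult QF_cnj QF_rat assms by metis
qed

lemma QF_divide: "x \<in> QF m \<Longrightarrow> y \<in> QF m \<Longrightarrow> x / y \<in> QF m"
  using QF_mult QF_inverse by (metis divide_inverse)

lemma rat_Ints_of: "(of_rat r :: complex) \<in> \<int> \<Longrightarrow> r \<in> \<int>"
proof -
  assume "(of_rat r :: complex) \<in> \<int>"
  then obtain z where "(of_rat r :: complex) = of_int z" by (auto elim: Ints_cases)
  then have "(of_rat r :: complex) = of_rat (of_int z)" by simp
  then have "r = of_int z" by (simp only: of_rat_eq_iff)
  then show ?thesis by simp
qed

lemma sqf_rat:
  fixes c :: rat
  assumes "squarefree m" "c * c * of_nat m \<in> \<int>"
  shows "c \<in> \<int>"
proof -
  obtain p d where pd: "quotient_of c = (p, d)" by (cases "quotient_of c")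
  have d0: "d > 0" using quotient_of_denom_pos[OF pd] .
  have cop: "coprime p d" using quotient_of_coprime[OF pd] .
  have c: "c = of_int p / of_int d" using quotient_of_div[OF pd] .
  from assms(2) obtain z where z: "c * c * of_nat m = of_int z" by (auto elim: Ints_cases)
  have "of_int (p * p * int m) = (of_int (z * d * d) :: rat)"
    using z d0 unfolding c by (simp add: field_simps)
  then have eq: "p * p * int m = z * d * d" by (simp only: of_int_eq_iff)
  have "d * d dvd p * p * int m" using eq by simp
  moreover have "coprime (d*d) (p*p)" using cop by (simp add: coprime_commute)
  ultimately have "d * d dvd int m"
    using coprime_dvd_mult_right_iff[of "d*d" "p*p" "int m"] by simp
  then have "int (nat d ^ 2) dvd int m" using d0 by (simp add: power2_eq_square)
  then have "nat d ^ 2 dvd m" by (simp only: int_dvd_int_iff)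
  then have "nat d dvd 1" using assms(1) unfolding squarefree_def by blast
  then have "d = 1" using d0 by simp
  then show ?thesis using c by simp
qed

locale qf =
  fixes m :: nat
  assumes m_pos: "m > 0" and sqf: "squarefree m" and cr: "cring (OK_ring m)"
begin

lemma carr[simp]: "carrier (OK_ring m) = OK m" by (simp add: OK_ring_def)
lemma ops[simp]: "mult (OK_ring m) = (*)" "add (OK_ring m) = (+)" "zero (OK_ring m) = 0" "one (OK_ring m) = 1"
  by (simp_all add: OK_ring_def)

lemma rng: "ring (OK_ring m)" using cr cring.axioms(1) by blast

lemma OK_QF: "x \<in> OK m \<Longrightarrow> x \<in> QF m" by (simp add: OK_def)

lemma OK_add: "x \<in> OK m \<Longrightarrow> y \<in> OK m \<Longrightarrow> x + y \<in> OK m"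
  using ring.ring_simprules(1)[OF rng, of x y] by simp

lemma OK_mult: "x \<in> OK m \<Longrightarrow> y \<in> OK m \<Longrightarrow> x * y \<in> OK m"
  using ring.ring_simprules(5)[OF rng, of x y] by simp

lemma OK_minus: assumes "x \<in> OK m" shows "- x \<in> OK m"
proof -
  have "a_inv (OK_ring m) x \<in> OK m" using ring.ring_simprules(3)[OF rng, of x] assms by simp
  moreover have "x + a_inv (OK_ring m) x = 0" using ring.ring_simprules(17)[OF rng, of x] assms by simp
  ultimately show ?thesis by (metis add_eq_0_iff)
qed

lemma OK_diff: "x \<in> OK m \<Longrightarrow> y \<in> OK m \<Longrightarrow> x - y \<in> OK m"
  using OK_add OK_minus by (metis diff_conv_add_uminus)

lemma OK_int[simp]: "of_int c \<in> OK m"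
  unfolding OK_def using QF_int int_imp_algebraic_int by auto

lemma OK_nat[simp]: "of_nat c \<in> OK m"
  using OK_int[of "int c"] by simp

lemma OK_0[simp]: "0 \<in> OK m" and OK_1[simp]: "1 \<in> OK m"
  using OK_int[of 0] OK_int[of 1] by simp_all

lemma OK_power: "x \<in> OK m \<Longrightarrow> x ^ n \<in> OK m"
  by (induction n) (auto simp: OK_mult)

lemma OK_s[simp]: "sqrt_neg m \<in> OK m"
proof -
  have "algebraic_int (sqrt_neg m)"
    by (rule algebraic_int.intros[of "[:of_nat m, 0, 1:]"]) (auto simp: coeff_pCons split: nat.splits)
  then show ?thesis unfolding OK_def using QF_s by auto
qed

lemma OK_cnj: "x \<in> OK m \<Longrightarrow> cnj x \<in> OK m"
  unfolding OK_def using QF_cnj by auto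

lemma OK_I: assumes "x \<in> QF m" "x + cnj x \<in> \<int>" "x * cnj x \<in> \<int>" shows "x \<in> OK m"
proof -
  have "algebraic_int x"
    apply (rule algebraic_int.intros[of "[:x * cnj x, -(x + cnj x), 1:]"])
    using assms Ints_minus[OF assms(2)] by (auto simp: coeff_pCons algebra_simps power2_eq_square split: nat.splits)
  then show ?thesis using assms unfolding OK_def by auto
qed

lemma OK_tr: "x \<in> OK m \<Longrightarrow> x + cnj x \<in> \<int>"
proof -
  assume x: "x \<in> OK m"
  then obtain a b where ab: "x = of_rat a + of_rat b * sqrt_neg m" using OK_QF QF_iff by blast
  have "x + cnj x = of_rat (2*a)" unfolding ab by (simp add: sqrt_neg_cnj of_rat_mult flip: cR_of)
  then have "x + cnj x \<in> \<rat>" by simp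
  moreover have "algebraic_int (x + cnj x)" using OK_add[OF x OK_cnj[OF x]] unfolding OK_def by simp
  ultimately show ?thesis using rational_algebraic_int_is_int by blast
qed

lemma OK_nm: "x \<in> OK m \<Longrightarrow> x * cnj x \<in> \<int>"
proof -
  assume x: "x \<in> OK m"
  obtain a b where ab: "x * cnj x = of_rat (a*a + of_nat m * b * b)" using norm_rat OK_QF[OF x] by blast
  then have "x * cnj x \<in> \<rat>" by simp
  moreover have "algebraic_int (x * cnj x)" using OK_mult[OF x OK_cnj[OF x]] unfolding OK_def by simp
  ultimately show ?thesis using rational_algebraic_int_is_int by blast
qed

lemma OK_rep: assumes x: "x \<in> OK m"
  shows "\<exists>A B :: int. 2 * x = of_int A + of_int B * sqrt_neg m"
proof -
  obtain a b where ab: "x * cnj x = of_rat (a*a + of_nat m * b * b)" "x = of_rat a + of_rat b * sqrt_neg m"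
    using norm_rat OK_QF[OF x] by blast
  have "x + cnj x = of_rat (2*a)" unfolding ab(2) by (simp add: sqrt_neg_cnj of_rat_mult flip: cR_of)
  then have a2: "2*a \<in> \<int>" using OK_tr[OF x] rat_Ints_of by metis
  have n: "a*a + of_nat m * b * b \<in> \<int>" using OK_nm[OF x] ab(1) rat_Ints_of by metis
  have "(2*b)*(2*b)*of_nat m = 4 * (a*a + of_nat m * b * b) - (2*a)*(2*a)" by (simp add: algebra_simps)
  also have "\<dots> \<in> \<int>" 
  proof -
    have "(4::rat) \<in> \<int>" by simp
    then show ?thesis by (rule Ints_diff[OF Ints_mult[OF _ n] Ints_mult[OF a2 a2]])
  qed
  finally have "2*b \<in> \<int>" using sqf_rat[OF sqf] by blast
  then obtain B where B: "2*b = of_int B" by (auto elim: Ints_cases)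
  from a2 obtain A where A: "2*a = of_int A" by (auto elim: Ints_cases)
  have "2 * x = of_rat (2*a) + of_rat (2*b) * sqrt_neg m" unfolding ab(2) by (simp add: of_rat_mult algebra_simps)
  then show ?thesis unfolding A B by auto
qed

lemma rep_norm: assumes "2 * x = of_int A + of_int B * sqrt_neg m"
  shows "4 * (x * cnj x) = of_int (A*A + int m * B * B)"
proof -
  have "4 * (x * cnj x) = (2*x) * cnj (2*x)" by simp
  also have "\<dots> = of_int (A*A + int m * B * B)" unfolding assms
    by (simp add: sqrt_neg_cnj algebra_simps)
  finally show ?thesis .
qed

end

context qf begin

lemma id_sub: "ideal I (OK_ring m) \<Longrightarrow> I \<subseteq> OK m"
  using additive_subgroup.a_subset ideal_def by fastforce

lemma id_in: "ideal I (OK_ring m) \<Longrightarrow> x \<in> I \<Longrightarrow> x \<in> OK m"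
  using id_sub by blast

lemma id_add: "ideal I (OK_ring m) \<Longrightarrow> a \<in> I \<Longrightarrow> b \<in> I \<Longrightarrow> a + b \<in> I"
  using additive_subgroup.a_closed[of I "OK_ring m" a b] unfolding ideal_def by simp

lemma id_lmul: "ideal I (OK_ring m) \<Longrightarrow> a \<in> I \<Longrightarrow> x \<in> OK m \<Longrightarrow> x * a \<in> I"
  using ideal.I_l_closed[of I "OK_ring m" a x] by simp

lemma id_rmul: "ideal I (OK_ring m) \<Longrightarrow> a \<in> I \<Longrightarrow> x \<in> OK m \<Longrightarrow> a * x \<in> I"
  using ideal.I_r_closed[of I "OK_ring m" a x] by simp

lemma id_minus: "ideal I (OK_ring m) \<Longrightarrow> a \<in> I \<Longrightarrow> - a \<in> I"
  using id_lmul[of I a "of_int (-1)"] OK_int[of "-1"] by simp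

lemma id_diff: "ideal I (OK_ring m) \<Longrightarrow> a \<in> I \<Longrightarrow> b \<in> I \<Longrightarrow> a - b \<in> I"
  using id_add id_minus by (metis diff_conv_add_uminus)

lemma id_0: "ideal I (OK_ring m) \<Longrightarrow> 0 \<in> I"
  using id_lmul[of I _ 0] by (metis (no_types, lifting) additive_subgroup.zero_closed ideal_def ops(3))

end

locale qfQ = qf +
  fixes Q :: "complex set" and q :: nat
  assumes pQ: "primeideal Q (OK_ring m)" and qp: "prime q" and qodd: "odd q" and qQ: "of_nat q \<in> Q"
begin

lemma iQ: "ideal Q (OK_ring m)" using pQ unfolding primeideal_def by blast

lemma Q_sub: "x \<in> Q \<Longrightarrow> x \<in> OK m" using id_in[OF iQ] .
lemma Q_add: "a \<in> Q \<Longrightarrow> b \<in> Q \<Longrightarrow> a + b \<in> Q" using id_add[OF iQ] .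
lemma Q_diff: "a \<in> Q \<Longrightarrow> b \<in> Q \<Longrightarrow> a - b \<in> Q" using id_diff[OF iQ] .
lemma Q_lmul: "a \<in> Q \<Longrightarrow> x \<in> OK m \<Longrightarrow> x * a \<in> Q" using id_lmul[OF iQ] .
lemma Q_rmul: "a \<in> Q \<Longrightarrow> x \<in> OK m \<Longrightarrow> a * x \<in> Q" using id_rmul[OF iQ] .
lemma Q_prime: "a \<in> OK m \<Longrightarrow> b \<in> OK m \<Longrightarrow> a * b \<in> Q \<Longrightarrow> a \<in> Q \<or> b \<in> Q"
  using primeideal.I_prime[OF pQ, of a b] by simp

lemma Q_not1: "1 \<notin> Q"
  using ideal.one_imp_carrier[OF iQ] primeideal.I_notcarr[OF pQ] by auto

lemma q_gt2: "q > 2" using qp qodd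
  by (metis dvd_refl even_numeral le_neq_implies_less prime_ge_2_nat)

lemma Q_int: "of_int c \<in> Q \<longleftrightarrow> int q dvd c"
proof
  assume "int q dvd c"
  then obtain k where "c = int q * k" by blast
  then have "of_int c = of_int k * (of_nat q :: complex)" by simp
  then show "of_int c \<in> Q" using Q_lmul[OF qQ, of "of_int k"] by simp
next
  assume c: "of_int c \<in> Q"
  show "int q dvd c"
  proof (rule ccontr)
    assume "\<not> int q dvd c"
    then have "coprime (int q) c" using qp by (simp add: prime_imp_coprime)
    then have g: "gcd (int q) c = 1" by simp
    obtain u w where "u * int q + w * c = gcd (int q) c" using bezout_int by blast
    then have "u * int q + w * c = 1" using g by simp
    then have "(1::complex) = of_int u * of_nat q + of_int w * of_int c"
      by (metis of_int_1 of_int_add of_int_mult of_int_of_nat_eq)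
    moreover have "of_int u * of_nat q + of_int w * of_int c \<in> Q"
      by (rule Q_add[OF Q_lmul[OF qQ] Q_lmul[OF c]]) auto
    ultimately show False using Q_not1 by simp
  qed
qed

lemma Q_nat: "of_nat c \<in> Q \<longleftrightarrow> q dvd c"
  using Q_int[of "int c"] by simp

lemma decomp: assumes x: "x \<in> OK m" and AB: "2 * x = of_int A + of_int B * sqrt_neg m"
  shows "x = of_int ((int q + 1) div 2 * A) + of_int ((int q + 1) div 2 * B) * sqrt_neg m - of_nat q * x"
proof -
  have h: "2 * ((int q + 1) div 2) = int q + 1" using qodd by (simp add: odd_iff_mod_2_eq_one) presburger
  then have "(of_int (2 * ((int q + 1) div 2)) :: complex) = of_nat q + 1" by simp
  then have h': "2 * (of_int ((int q + 1) div 2) :: complex) = of_nat q + 1" by simp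
  have "of_int ((int q + 1) div 2 * A) + of_int ((int q + 1) div 2 * B) * sqrt_neg m
      = of_int ((int q + 1) div 2) * (2 * x)" unfolding AB by (simp add: algebra_simps)
  also have "\<dots> = (of_nat q + 1) * x" using h' by (simp add: algebra_simps)
  finally show ?thesis by (simp add: algebra_simps)
qed

lemma hdvd: "int q dvd (int q + 1) div 2 * A \<longleftrightarrow> int q dvd A"
proof -
  have h: "2 * ((int q + 1) div 2) = int q + 1" using qodd by (simp add: odd_iff_mod_2_eq_one) presburger
  have "coprime (int q) ((int q + 1) div 2)"
  proof -
    have "coprime (int q) (int q + 1)" by simp
    then show ?thesis using h by (metis coprime_commute coprime_mult_left_iff)
  qed
  then show ?thesis by (simp add: coprime_dvd_mult_right_iff)
qed

lemma ramified: assumes "q dvd m" and x: "x \<in> OK m" and AB: "2 * x = of_int A + of_int B * sqrt_neg m"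
  shows "x \<in> Q \<longleftrightarrow> int q dvd A"
proof -
  have "of_int (- int m) \<in> Q" using assms(1) by (simp only: Q_int) simp
  then have "sqrt_neg m * sqrt_neg m \<in> Q" by simp
  then have sQ: "sqrt_neg m \<in> Q" using Q_prime[OF OK_s OK_s] by blast
  define h where "h = (int q + 1) div 2"
  have xd: "x = of_int (h * A) + (of_int (h * B) * sqrt_neg m - of_nat q * x)"
    using decomp[OF x AB] unfolding h_def by (simp add: add_diff_eq)
  have r: "of_int (h * B) * sqrt_neg m - of_nat q * x \<in> Q"
    by (rule Q_diff[OF Q_lmul[OF sQ OK_int] Q_rmul[OF qQ x]])
  have "x \<in> Q \<longleftrightarrow> of_int (h * A) \<in> Q"
  proof
    assume "x \<in> Q" then show "of_int (h * A) \<in> Q" using Q_diff[OF _ r] xd by (metis add_diff_cancel_right')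
  next
    assume "of_int (h * A) \<in> Q" then show "x \<in> Q" using Q_add[OF _ r] xd by metis
  qed
  then show ?thesis unfolding Q_int h_def hdvd .
qed

end

context qf begin

lemma OK_I2: assumes AB: "2 * y = of_int A + of_int B * sqrt_neg m" and d: "4 dvd A*A + int m*B*B"
  shows "y \<in> OK m"
proof -
  have y: "y = of_rat (of_int A / 2) + of_rat (of_int B / 2) * sqrt_neg m"
    using AB by (simp add: of_rat_divide field_simps)
  have c: "cnj (2*y) = of_int A - of_int B * sqrt_neg m" unfolding AB by (simp add: sqrt_neg_cnj)
  then have "2 * (y + cnj y) = 2 * of_int A" using AB by (simp add: algebra_simps)
  then have "y + cnj y = of_int A" by (metis mult_cancel_left zero_neq_numeral)
  moreover have "4 * (y * cnj y) = of_int (A*A + int m * B * B)" by (rule rep_norm[OF AB])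
  moreover from d obtain X where "A*A + int m*B*B = 4 * X" by blast
  ultimately have "y + cnj y \<in> \<int>" "y * cnj y \<in> \<int>" by auto
  then show ?thesis using OK_I QF_I[OF y] by blast
qed

end

context qfQ begin

lemma inert: assumes nr: "\<forall>r::int. \<not> int q dvd r^2 + int m" and x: "x \<in> OK m"
  shows "x \<in> Q \<longleftrightarrow> x / of_nat q \<in> OK m"
proof
  assume "x / of_nat q \<in> OK m"
  then have "of_nat q * (x / of_nat q) \<in> Q" using Q_rmul[OF qQ] by blast
  then show "x \<in> Q" using q_gt2 by simp
next
  assume xQ: "x \<in> Q"
  obtain A B where AB: "2 * x = of_int A + of_int B * sqrt_neg m" using OK_rep[OF x] by blast
  have "(4::complex) \<in> OK m" using OK_nat[of 4] by simp
  then have "4 * (x * cnj x) \<in> Q" using Q_lmul[OF Q_rmul[OF xQ OK_cnj[OF x]], of 4] by simp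
  then have "of_int (A*A + int m * B * B) \<in> Q" using rep_norm[OF AB] by simp
  then have dv: "int q dvd A*A + int m * B * B" using Q_int by blast
  have qB: "int q dvd B"
  proof (rule ccontr)
    assume "\<not> int q dvd B"
    then have "coprime (int q) B" using qp by (simp add: prime_imp_coprime)
    then have g: "gcd (int q) B = 1" by simp
    obtain u w where "u * int q + w * B = gcd (int q) B" using bezout_int by blast
    then have wB: "w * B = 1 - u * int q" using g by simp
    have "w*w*(A*A + int m*B*B) = (A*w)*(A*w) + int m*((w*B)*(w*B))" by (simp add: algebra_simps)
    also have "\<dots> = (A*w)^2 + int m - int q * (int m * (2*u - u*u*int q))"
      unfolding wB by (simp add: algebra_simps power2_eq_square)
    finally have "(A*w)^2 + int m = w*w*(A*A + int m*B*B) + int q * (int m * (2*u - u*u*int q))" by simp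
    then have "int q dvd (A*w)^2 + int m" using dv by simp
    then show False using nr by blast
  qed
  then obtain B' where B': "B = int q * B'" by blast
  have "int q dvd A*A" using dv B' by (simp add: dvd_add_left_iff algebra_simps)
  then have "int q dvd A" using qp by (simp add: prime_dvd_mult_iff)
  then obtain A' where A': "A = int q * A'" by blast
  have AB': "2 * (x / of_nat q) = of_int A' + of_int B' * sqrt_neg m"
    using AB q_gt2 unfolding A' B' by (simp add: field_simps)
  obtain N where N: "x * cnj x = of_int N" using OK_nm[OF x] by (auto elim: Ints_cases)
  have "of_int (4 * N) = (of_int (A*A + int m * B * B) :: complex)" using rep_norm[OF AB] N by simp
  then have "4 * N = A*A + int m * B * B" by (simp only: of_int_eq_iff)
  also have "\<dots> = int q ^ 2 * (A'*A' + int m*B'*B')" unfolding A' B' by (simp add: algebra_simps power2_eq_square)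
  finally have "4 dvd int q ^ 2 * (A'*A' + int m*B'*B')" by (metis dvd_triv_left)
  moreover have "coprime (4::int) (int q ^ 2)"
  proof -
    have "odd (int q)" using qodd by simp
    then have "coprime 2 (int q)" using coprime_left_2_iff_odd by blast
    then have c: "coprime (2*2) (int q)" using coprime_mult_left_iff by blast
    have "(4::int) = 2*2" by simp
    then have c4: "coprime 4 (int q)" using c by metis
    then show ?thesis using c4 by simp
  qed
  ultimately have "4 dvd A'*A' + int m*B'*B'" by (simp add: coprime_dvd_mult_right_iff)
  then show "x / of_nat q \<in> OK m" using OK_I2[OF AB'] by blast
qed

lemma split_exists: assumes nm: "\<not> q dvd m" and ex: "\<exists>r::int. int q dvd r^2 + int m"
  shows "\<exists>r::int. sqrt_neg m - of_int r \<in> Q \<and> int q dvd r^2 + int m \<and> \<not> int q ^ 2 dvd r^2 + int m \<and> \<not> int q dvd r"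
proof -
  obtain r0 where r0: "int q dvd r0^2 + int m" using ex by blast
  have "(sqrt_neg m - of_int r0) * (sqrt_neg m - of_int (- r0)) = - of_int (r0^2 + int m)"
    by (simp add: algebra_simps power2_eq_square)
  also have "\<dots> \<in> Q"
  proof -
    have d: "int q dvd -(r0^2+int m)" using r0 by (simp only: dvd_minus_iff)
    have "of_int (-(r0^2+int m)) \<in> Q" using Q_int d by blast
    then show ?thesis by simp
  qed
  finally have "sqrt_neg m - of_int r0 \<in> Q \<or> sqrt_neg m - of_int (- r0) \<in> Q"
    using Q_prime OK_diff OK_s OK_int by blast
  then obtain r1 where r1: "sqrt_neg m - of_int r1 \<in> Q" "int q dvd r1^2 + int m"
    using r0 by (metis power2_minus)
  have nr1: "\<not> int q dvd r1"
  proof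
    assume "int q dvd r1"
    then have "int q dvd r1^2" by (simp add: power2_eq_square)
    then have "int q dvd int m" using r1(2) by (simp add: dvd_add_right_iff)
    then show False using nm by simp
  qed
  show ?thesis
  proof (cases "int q ^ 2 dvd r1^2 + int m")
    case False then show ?thesis using r1 nr1 by blast
  next
    case True
    let ?r2 = "r1 + int q"
    have "sqrt_neg m - of_int ?r2 = (sqrt_neg m - of_int r1) - of_nat q" by simp
    also have "\<dots> \<in> Q" using Q_diff[OF r1(1) qQ] .
    finally have s2: "sqrt_neg m - of_int ?r2 \<in> Q" .
    have e: "?r2^2 + int m = (r1^2 + int m) + int q * (2*r1) + int q ^ 2" by (simp add: power2_eq_square algebra_simps)
    have "\<not> int q ^ 2 dvd ?r2^2 + int m"
    proof
      assume "int q ^ 2 dvd ?r2^2 + int m"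
      then have "int q ^ 2 dvd int q * (2*r1)" using True unfolding e by (simp add: dvd_add_right_iff dvd_add_left_iff)
      then have "int q dvd 2 * r1" using qp by (simp add: power2_eq_square)
      then have "int q dvd 2 \<or> int q dvd r1" using qp by (simp add: prime_dvd_mult_iff)
      then show False using nr1 q_gt2 by (auto dest: zdvd_imp_le)
    qed
    moreover have "int q dvd ?r2^2 + int m" using r1(2) unfolding e by simp
    moreover have "\<not> int q dvd ?r2" using nr1 by simp
    ultimately show ?thesis using s2 by blast
  qed
qed

end

context qf begin

lemma P_ideal: "ideal Q (OK_ring m) \<Longrightarrow> ideal (ideal_pow m Q e) (OK_ring m)"
proof (induction e)
  case 0 then show ?case using ring.oneideal[OF rng] by simp
next
  case (Suc e) then show ?case using ring.ideal_prod_is_ideal[OF rng] by simp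
qed

lemma P_sub: "ideal Q (OK_ring m) \<Longrightarrow> x \<in> ideal_pow m Q e \<Longrightarrow> x \<in> OK m"
  using id_in[OF P_ideal] by blast

lemma P_Suc_sub: assumes i: "ideal Q (OK_ring m)" shows "ideal_pow m Q (Suc e) \<subseteq> ideal_pow m Q e"
  using ring.ideal_prod_inter[OF rng i P_ideal[OF i, of e]] by auto

lemma P_mono: assumes i: "ideal Q (OK_ring m)" and "e \<le> e'" shows "ideal_pow m Q e' \<subseteq> ideal_pow m Q e"
  using assms(2)
proof (induction e' rule: dec_induct)
  case base then show ?case by simp
next
  case (step n) then show ?case using P_Suc_sub[OF i, of n] by blast
qed

lemma P_mul: "a \<in> Q \<Longrightarrow> b \<in> ideal_pow m Q e \<Longrightarrow> a * b \<in> ideal_pow m Q (Suc e)"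
  using ideal_prod.prod[of a Q b "ideal_pow m Q e" "OK_ring m"] by simp

lemma P_pow: "ideal Q (OK_ring m) \<Longrightarrow> a \<in> Q \<Longrightarrow> a ^ e \<in> ideal_pow m Q e"
proof (induction e)
  case 0 then show ?case by simp
next
  case (Suc e) then show ?case using P_mul[of a Q "a^e" e] by simp
qed

lemma P_1: "ideal Q (OK_ring m) \<Longrightarrow> ideal_pow m Q 1 = Q"
proof
  assume i: "ideal Q (OK_ring m)"
  show "ideal_pow m Q 1 \<subseteq> Q" using ring.ideal_prod_inter[OF rng i P_ideal[OF i, of 0]] by auto
  show "Q \<subseteq> ideal_pow m Q 1" using P_mul[of _ Q 1 0] by auto
qed

end

locale qfS = qfQ +
  fixes r :: int
  assumes sr: "sqrt_neg m - of_int r \<in> Q" and qdr: "int q dvd r^2 + int m"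
    and nq2: "\<not> int q ^ 2 dvd r^2 + int m" and nqr: "\<not> int q dvd r"
begin

definition t where "t = sqrt_neg m + of_int r"
definition j where "j = (r^2 + int m) div int q"

lemma jq: "r^2 + int m = int q * j" using qdr unfolding j_def by simp

lemma cop_j: "coprime (int q) j"
proof -
  have "\<not> int q dvd j"
  proof
    assume "int q dvd j"
    then have "int q ^ 2 dvd int q * j" by (simp add: power2_eq_square)
    then show False using nq2 jq by simp
  qed
  then show ?thesis using qp by (simp add: prime_imp_coprime)
qed

lemma t_OK: "t \<in> OK m" unfolding t_def using OK_add by simp

lemma t_notQ: "t \<notin> Q"
proof
  assume "t \<in> Q"
  then have "t - (sqrt_neg m - of_int r) \<in> Q" using Q_diff sr by blast
  then have "of_int (2 * r) \<in> Q" unfolding t_def by simp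
  then have "int q dvd 2 * r" using Q_int by blast
  then have "int q dvd 2 \<or> int q dvd r" using qp by (simp add: prime_dvd_mult_iff)
  then show False using nqr q_gt2 by (auto dest: zdvd_imp_le)
qed

lemma pi_t: "(sqrt_neg m - of_int r) * t = - of_int (int q * j)"
proof -
  have "(sqrt_neg m - of_int r) * t = - of_int (r^2 + int m)"
    unfolding t_def by (simp add: algebra_simps power2_eq_square)
  then show ?thesis using jq by simp
qed

lemma t_cnj: "t * cnj t = of_int (int q * j)"
proof -
  have "t * cnj t = of_int (r^2 + int m)"
    unfolding t_def by (simp add: sqrt_neg_cnj algebra_simps power2_eq_square)
  then show ?thesis using jq by simp
qed

lemma residue: assumes x: "x \<in> OK m" shows "\<exists>c. x - of_int c \<in> Q"
proof -
  obtain A B where AB: "2 * x = of_int A + of_int B * sqrt_neg m" using OK_rep[OF x] by blast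
  define h where "h = (int q + 1) div 2"
  have "x - of_int (h * A + h * B * r) = of_int (h * B) * (sqrt_neg m - of_int r) - of_nat q * x"
    using decomp[OF x AB] unfolding h_def by (simp add: algebra_simps)
  also have "\<dots> \<in> Q" by (rule Q_diff[OF Q_lmul[OF sr OK_int] Q_rmul[OF qQ x]])
  finally show ?thesis by blast
qed

lemma key1: assumes xQ: "x \<in> Q" shows "x * t / of_nat q \<in> OK m"
proof -
  have x: "x \<in> OK m" using Q_sub[OF xQ] .
  obtain A B where AB: "2 * x = of_int A + of_int B * sqrt_neg m" using OK_rep[OF x] by blast
  define h where "h = (int q + 1) div 2"
  define c where "c = h * A + h * B * r"
  have xe: "x = of_int c + of_int (h * B) * (sqrt_neg m - of_int r) - of_nat q * x"
    using decomp[OF x AB] unfolding h_def c_def by (simp add: algebra_simps)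
  have "of_int (h * B) * (sqrt_neg m - of_int r) - of_nat q * x \<in> Q"
    by (rule Q_diff[OF Q_lmul[OF sr OK_int] Q_rmul[OF qQ x]])
  then have "of_int c \<in> Q" using Q_diff[OF xQ] xe
    by (metis (no_types, lifting) add_diff_cancel_right' diff_diff_eq2)
  then obtain c' where c': "c = int q * c'" using Q_int by blast
  have "x * t / of_nat q = of_int c' * t - of_int (h * B * j) - x * t"
  proof -
    have "x * t = (of_int c + of_int (h * B) * (sqrt_neg m - of_int r) - of_nat q * x) * t"
      using xe by simp
    also have "\<dots> = of_int c * t + of_int (h * B) * ((sqrt_neg m - of_int r) * t) - of_nat q * x * t"
      by (simp add: algebra_simps)
    also have "\<dots> = of_int c * t - of_int (h * B) * of_int (int q * j) - of_nat q * x * t"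
      unfolding pi_t by simp
    also have "\<dots> = of_nat q * (of_int c' * t - of_int (h * B * j) - x * t)"
      unfolding c' by (simp add: algebra_simps)
    finally show ?thesis using q_gt2 by (simp add: field_simps)
  qed
  also have "\<dots> \<in> OK m" using OK_diff OK_mult t_OK x OK_int by simp
  finally show ?thesis .
qed

end

context qfS begin

lemma P_fwd: "x \<in> ideal_pow m Q e \<Longrightarrow> x * t^e / of_nat q^e \<in> OK m"
proof (induction e arbitrary: x)
  case 0 then show ?case by simp
next
  case (Suc e)
  have "x \<in> ideal_prod (OK_ring m) Q (ideal_pow m Q e)" using Suc.prems by simp
  then show ?case
  proof (induction x rule: ideal_prod.induct)
    case (prod i j')
    have "(i * j') * t ^ Suc e / of_nat q ^ Suc e = (i * t / of_nat q) * (j' * t^e / of_nat q^e)"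
      by (simp add: field_simps)
    also have "\<dots> \<in> OK m" using OK_mult[OF key1[OF prod(1)] Suc.IH[OF prod(2)]] .
    finally show ?case by simp
  next
    case (sum s1 s2)
    have "(s1 + s2) * t ^ Suc e / of_nat q ^ Suc e = s1 * t ^ Suc e / of_nat q ^ Suc e + s2 * t ^ Suc e / of_nat q ^ Suc e"
      by (simp only: distrib_right add_divide_distrib)
    then show ?case using sum OK_add by simp
  qed
qed

lemma P_bwd: assumes x: "x \<in> OK m" and y: "x * t^e / of_nat q^e \<in> OK m"
  shows "x \<in> ideal_pow m Q e"
proof -
  define y' where "y' = x * t^e / of_nat q^e"
  have iP: "ideal (ideal_pow m Q e) (OK_ring m)" using P_ideal[OF iQ] .
  have "(- of_int (int q * j) :: complex) = of_nat q * (- of_int j)" by simp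
  then have pe: "(sqrt_neg m - of_int r)^e * t^e = of_nat q^e * (- of_int j)^e"
    using pi_t by (metis power_mult_distrib)
  have "(sqrt_neg m - of_int r)^e * y' = x * ((sqrt_neg m - of_int r)^e * t^e) / of_nat q^e"
    unfolding y'_def by (simp add: algebra_simps)
  also have "\<dots> = x * (- of_int j)^e" unfolding pe using q_gt2 by simp
  finally have "(sqrt_neg m - of_int r)^e * y' = x * (- of_int j)^e" .
  moreover have "(sqrt_neg m - of_int r)^e * y' \<in> ideal_pow m Q e"
    using id_rmul[OF iP P_pow[OF iQ sr] y[folded y'_def]] .
  ultimately have xj: "x * (- of_int j)^e \<in> ideal_pow m Q e" by simp
  have "coprime (int q ^ e) ((- j) ^ e)" using cop_j by simp
  then have "gcd (int q ^ e) ((- j) ^ e) = 1" using coprime_iff_gcd_eq_1 by blast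
  moreover obtain u w where "u * int q ^ e + w * (- j) ^ e = gcd (int q ^ e) ((- j) ^ e)" using bezout_int by blast
  ultimately have uw: "u * int q ^ e + w * (- j) ^ e = 1" by simp
  then have "(of_int (u * int q ^ e + w * (- j) ^ e) :: complex) = 1" by simp
  then have "x = of_int u * (of_nat q ^ e * x) + of_int w * (x * (- of_int j)^e)"
    by (simp add: algebra_simps) (metis mult.left_neutral distrib_right mult.commute mult.assoc)
  also have "\<dots> \<in> ideal_pow m Q e"
    by (rule id_add[OF iP id_lmul[OF iP id_rmul[OF iP P_pow[OF iQ qQ] x] OK_int] id_lmul[OF iP xj OK_int]])
  finally show ?thesis .
qed

lemma P_char: "x \<in> OK m \<Longrightarrow> x \<in> ideal_pow m Q e \<longleftrightarrow> x * t^e / of_nat q^e \<in> OK m"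
  using P_fwd P_bwd by blast

lemma P_bound: assumes x: "x \<in> OK m" "x \<noteq> 0" shows "\<exists>b. \<forall>e. x \<in> ideal_pow m Q e \<longrightarrow> e \<le> b"
proof -
  obtain Nx where Nx: "x * cnj x = of_int Nx" using OK_nm[OF x(1)] by (auto elim: Ints_cases)
  have Nx0: "Nx \<noteq> 0" using Nx x(2) by (metis complex_cnj_zero_iff mult_eq_0_iff of_int_0)
  have "e \<le> nat \<bar>Nx\<bar>" if "x \<in> ideal_pow m Q e" for e
  proof -
    define y where "y = x * t^e / of_nat q^e"
    have yO: "y \<in> OK m" using P_fwd[OF that] unfolding y_def .
    obtain Ny where Ny: "y * cnj y = of_int Ny" using OK_nm[OF yO] by (auto elim: Ints_cases)
    have "y * of_nat q ^ e = x * t^e" unfolding y_def using q_gt2 by simp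
    then have "(y * of_nat q ^ e) * cnj (y * of_nat q ^ e) = (x * t^e) * cnj (x * t^e)" by simp
    then have "(y * cnj y) * of_nat q ^ e * of_nat q ^ e = (x * cnj x) * (t * cnj t)^e"
      by (simp add: algebra_simps power_mult_distrib)
    then have "of_int (Ny * int q ^ e * int q ^ e) = (of_int (Nx * (int q * j)^e) :: complex)"
      unfolding Ny Nx t_cnj by simp
    then have "Ny * int q ^ e * int q ^ e = Nx * (int q * j)^e" by (simp only: of_int_eq_iff)
    then have "Ny * int q ^ e * int q ^ e = (Nx * j^e) * int q ^ e" by (simp add: power_mult_distrib algebra_simps)
    then have "Ny * int q ^ e = Nx * j^e" using q_gt2 by simp
    then have "int q ^ e dvd Nx * j^e" by (metis dvd_triv_right)
    moreover have "coprime (int q ^ e) (j ^ e)" using cop_j by simp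
    ultimately have "int q ^ e dvd Nx" by (simp add: coprime_dvd_mult_left_iff)
    then have "\<bar>int q ^ e\<bar> \<le> \<bar>Nx\<bar>" by (rule dvd_imp_le_int[OF Nx0])
    then have "int q ^ e \<le> \<bar>Nx\<bar>" by simp
    moreover have "int e < int q ^ e"
    proof -
      have "e < 2 ^ e" by (rule less_exp)
      also have "\<dots> \<le> q ^ e" using q_gt2 by (simp add: power_mono)
      finally show ?thesis by (metis of_nat_less_iff of_nat_power)
    qed
    ultimately have "int e \<le> \<bar>Nx\<bar>" by linarith
    then show ?thesis by arith
  qed
  then show ?thesis by blast
qed

lemma ord_ge: assumes x: "x \<in> OK m" "x \<noteq> 0" shows "x \<in> ideal_pow m Q e \<longleftrightarrow> e \<le> ordO m Q x"
proof -
  obtain b where b: "\<And>e. x \<in> ideal_pow m Q e \<Longrightarrow> e \<le> b" using P_bound[OF x] by blast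
  have x0: "x \<in> ideal_pow m Q 0" using x by simp
  have G: "x \<in> ideal_pow m Q (ordO m Q x)" unfolding ordO_def by (rule GreatestI_nat[where P="\<lambda>e. x \<in> ideal_pow m Q e", OF x0 b])
  show ?thesis
  proof
    assume "x \<in> ideal_pow m Q e" then show "e \<le> ordO m Q x" unfolding ordO_def by (rule Greatest_le_nat[where P="\<lambda>e. x \<in> ideal_pow m Q e", OF _ b])
  next
    assume "e \<le> ordO m Q x" then show "x \<in> ideal_pow m Q e" using P_mono[OF iQ] G by blast
  qed
qed

lemma ord_char: "x \<in> OK m \<Longrightarrow> x \<noteq> 0 \<Longrightarrow> e \<le> ordO m Q x \<longleftrightarrow> x * t^e / of_nat q^e \<in> OK m"
  using ord_ge P_char by blast

lemma ord_Q: "x \<in> OK m \<Longrightarrow> x \<noteq> 0 \<Longrightarrow> 1 \<le> ordO m Q x \<longleftrightarrow> x \<in> Q"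
  using ord_ge[of x 1] P_1[OF iQ] by simp

lemma ord_add: assumes "x \<in> OK m" "x \<noteq> 0" "y \<in> OK m" "y \<noteq> 0" "x + y \<noteq> 0"
  shows "min (ordO m Q x) (ordO m Q y) \<le> ordO m Q (x + y)"
proof -
  let ?e = "min (ordO m Q x) (ordO m Q y)"
  have "x \<in> ideal_pow m Q ?e" "y \<in> ideal_pow m Q ?e" using ord_ge assms by auto
  then have "x + y \<in> ideal_pow m Q ?e" using id_add[OF P_ideal[OF iQ]] by blast
  then show ?thesis using ord_ge assms OK_add by blast
qed

lemma ord_mult: assumes x: "x \<in> OK m" "x \<noteq> 0" and y: "y \<in> OK m" "y \<noteq> 0"
  shows "ordO m Q (x * y) = ordO m Q x + ordO m Q y"
proof -
  define a where "a = ordO m Q x"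
  define b where "b = ordO m Q y"
  have xy: "x * y \<in> OK m" "x * y \<noteq> 0" using x y OK_mult by auto
  define x1 where "x1 = x * t^a / of_nat q^a"
  define y1 where "y1 = y * t^b / of_nat q^b"
  have "a \<le> ordO m Q x" unfolding a_def by simp
  then have x1: "x1 \<in> OK m" unfolding x1_def using ord_char[OF x] by blast
  have "b \<le> ordO m Q y" unfolding b_def by simp
  then have y1: "y1 \<in> OK m" unfolding y1_def using ord_char[OF y] by blast
  have x1Q: "x1 \<notin> Q"
  proof
    assume "x1 \<in> Q"
    then have "x1 * t / of_nat q \<in> OK m" by (rule key1)
    moreover have "x1 * t / of_nat q = x * t^(Suc a) / of_nat q^(Suc a)" unfolding x1_def by (simp add: field_simps)
    ultimately have "Suc a \<le> a" using ord_char[OF x, of "Suc a"] a_def by simp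
    then show False by simp
  qed
  have y1Q: "y1 \<notin> Q"
  proof
    assume "y1 \<in> Q"
    then have "y1 * t / of_nat q \<in> OK m" by (rule key1)
    moreover have "y1 * t / of_nat q = y * t^(Suc b) / of_nat q^(Suc b)" unfolding y1_def by (simp add: field_simps)
    ultimately have "Suc b \<le> b" using ord_char[OF y, of "Suc b"] b_def by simp
    then show False by simp
  qed
  have e1: "x * y * t^(a+b) / of_nat q^(a+b) = x1 * y1" unfolding x1_def y1_def by (simp add: field_simps power_add)
  have ge: "a + b \<le> ordO m Q (x*y)" using ord_char[OF xy, of "a+b"] e1 OK_mult[OF x1 y1] by simp
  have le: "\<not> Suc (a + b) \<le> ordO m Q (x*y)"
  proof
    assume "Suc (a + b) \<le> ordO m Q (x*y)"
    then have "x * y * t^(Suc (a+b)) / of_nat q^(Suc (a+b)) \<in> OK m" using ord_char[OF xy] by blast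
    moreover have "x * y * t^(Suc (a+b)) / of_nat q^(Suc (a+b)) = (x * y * t^(a+b) / of_nat q^(a+b)) * t / of_nat q"
      using q_gt2 by (simp add: field_simps)
    then have "x * y * t^(Suc (a+b)) / of_nat q^(Suc (a+b)) = x1 * y1 * t / of_nat q"
      using e1 by simp
    ultimately have "x1 * y1 * t / of_nat q \<in> OK m" by simp
    then have "of_nat q * (x1 * y1 * t / of_nat q) \<in> Q" using Q_rmul[OF qQ] by blast
    then have "x1 * y1 * t \<in> Q" using q_gt2 by simp
    then have "x1 * y1 \<in> Q \<or> t \<in> Q" using Q_prime OK_mult[OF x1 y1] t_OK by blast
    then show False using Q_prime[OF x1 y1] x1Q y1Q t_notQ by blast
  qed
  show ?thesis using ge le unfolding a_def b_def by simp
qed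

end

context qf begin

lemma QF_den: assumes "x \<in> QF m" shows "\<exists>D::int. D \<noteq> 0 \<and> of_int D * x \<in> OK m"
proof -
  obtain a b where x: "x = of_rat a + of_rat b * sqrt_neg m" using assms QF_iff by blast
  obtain p1 d1 where 1: "quotient_of a = (p1, d1)" by (cases "quotient_of a")
  obtain p2 d2 where 2: "quotient_of b = (p2, d2)" by (cases "quotient_of b")
  have d1: "d1 > 0" using quotient_of_denom_pos[OF 1] .
  have d2: "d2 > 0" using quotient_of_denom_pos[OF 2] .
  have a: "a = of_int p1 / of_int d1" using quotient_of_div[OF 1] .
  have b: "b = of_int p2 / of_int d2" using quotient_of_div[OF 2] .
  have "of_int (d1 * d2) * x = of_int (p1 * d2) + of_int (p2 * d1) * sqrt_neg m"
    unfolding x a b using d1 d2 by (simp add: of_rat_divide field_simps)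
  also have "\<dots> \<in> OK m" using OK_add OK_mult by simp
  finally show ?thesis using d1 d2 by (intro exI[of _ "d1*d2"]) simp
qed

end

context qfS begin

lemma ordO_1: "ordO m Q 1 = 0"
  using ord_Q[of 1] Q_not1 by simp

lemma ordK_ex: assumes "x \<in> QF m" "x \<noteq> 0"
  shows "\<exists>a b. a \<in> OK m - {0} \<and> b \<in> OK m - {0} \<and> x = a / b"
proof -
  obtain D :: int where D: "D \<noteq> 0" "of_int D * x \<in> OK m" using QF_den[OF assms(1)] by blast
  show ?thesis
    by (rule exI[of _ "of_int D * x"], rule exI[of _ "of_int D"]) (use D assms(2) in auto)
qed

lemma ordK_eq: assumes a: "a \<in> OK m" "a \<noteq> 0" and b: "b \<in> OK m" "b \<noteq> 0"
  shows "ordK m Q (a / b) = int (ordO m Q a) - int (ordO m Q b)"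
proof -
  let ?P = "\<lambda>e. \<exists>a' b'. a' \<in> OK m - {0} \<and> b' \<in> OK m - {0} \<and> a / b = a' / b'
                     \<and> e = int (ordO m Q a') - int (ordO m Q b')"
  have ex: "\<exists>e. ?P e" using a b by blast
  obtain a' b' where w: "a' \<in> OK m - {0}" "b' \<in> OK m - {0}" "a / b = a' / b'"
     "ordK m Q (a / b) = int (ordO m Q a') - int (ordO m Q b')"
    using someI_ex[OF ex] unfolding ordK_def by blast
  have "a * b' = a' * b" using w(1,2,3) b by (simp add: field_simps)
  then have "ordO m Q (a * b') = ordO m Q (a' * b)" by simp
  then have "ordO m Q a + ordO m Q b' = ordO m Q a' + ordO m Q b"
    using ord_mult w(1,2) a b by simp
  then show ?thesis using w(4) by simp
qed

lemma ordK_OK: "x \<in> OK m \<Longrightarrow> x \<noteq> 0 \<Longrightarrow> ordK m Q x = int (ordO m Q x)"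
  using ordK_eq[of x 1] ordO_1 by simp

lemma ordK_mult: assumes "x \<in> QF m" "x \<noteq> 0" "y \<in> QF m" "y \<noteq> 0"
  shows "ordK m Q (x * y) = ordK m Q x + ordK m Q y"
proof -
  obtain a b where ab: "a \<in> OK m - {0}" "b \<in> OK m - {0}" "x = a / b" using ordK_ex assms by blast
  obtain c d where cd: "c \<in> OK m - {0}" "d \<in> OK m - {0}" "y = c / d" using ordK_ex assms by blast
  have "x * y = (a * c) / (b * d)" using ab cd by simp
  then have "ordK m Q (x * y) = int (ordO m Q (a*c)) - int (ordO m Q (b*d))"
    using ordK_eq ab cd OK_mult by simp
  then show ?thesis using ordK_eq ab cd ord_mult by simp
qed

lemma ordK_add: assumes "x \<in> QF m" "x \<noteq> 0" "y \<in> QF m" "y \<noteq> 0" "x + y \<noteq> 0"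
  shows "min (ordK m Q x) (ordK m Q y) \<le> ordK m Q (x + y)"
proof -
  obtain a b where ab: "a \<in> OK m - {0}" "b \<in> OK m - {0}" "x = a / b" using ordK_ex assms by blast
  obtain c d where cd: "c \<in> OK m - {0}" "d \<in> OK m - {0}" "y = c / d" using ordK_ex assms by blast
  have e: "x + y = (a * d + c * b) / (b * d)" using ab cd by (simp add: field_simps)
  have nz: "a * d + c * b \<noteq> 0" using e assms(5) by auto
  have O1: "a * d \<in> OK m" "c * b \<in> OK m" "b * d \<in> OK m" using ab cd OK_mult by auto
  have "ordK m Q (x + y) = int (ordO m Q (a*d + c*b)) - int (ordO m Q (b*d))"
    using ordK_eq[OF OK_add[OF O1(1,2)] nz O1(3)] ab cd e by simp
  moreover have "min (ordO m Q (a*d)) (ordO m Q (c*b)) \<le> ordO m Q (a*d + c*b)"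
    using ord_add[OF O1(1) _ O1(2) _ nz] ab cd by simp
  moreover have "ordO m Q (a*d) = ordO m Q a + ordO m Q d" "ordO m Q (c*b) = ordO m Q c + ordO m Q b"
    "ordO m Q (b*d) = ordO m Q b + ordO m Q d" using ord_mult ab cd by auto
  moreover have "ordK m Q x = int (ordO m Q a) - int (ordO m Q b)" "ordK m Q y = int (ordO m Q c) - int (ordO m Q d)"
    using ordK_eq ab cd by auto
  ultimately show ?thesis by linarith
qed

lemma ordK_inv: assumes "x \<in> QF m" "x \<noteq> 0" shows "ordK m Q (inverse x) = - ordK m Q x"
proof -
  obtain a b where ab: "a \<in> OK m - {0}" "b \<in> OK m - {0}" "x = a / b" using ordK_ex assms by blast
  have "inverse x = b / a" using ab by simp
  then show ?thesis using ordK_eq ab by simp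
qed

lemma ordK_pow: assumes "x \<in> QF m" "x \<noteq> 0" shows "ordK m Q (x ^ n) = int n * ordK m Q x"
proof (induction n)
  case 0 then show ?case using ordK_OK[of 1] ordO_1 by simp
next
  case (Suc n)
  have "ordK m Q (x ^ Suc n) = ordK m Q x + ordK m Q (x ^ n)"
    using ordK_mult[OF assms QF_power[OF assms(1)]] assms(2) by simp
  then show ?case using Suc by (simp add: algebra_simps)
qed

definition V0 where "V0 x \<longleftrightarrow> x = 0 \<or> 0 \<le> ordK m Q x"
definition V1 where "V1 x \<longleftrightarrow> x = 0 \<or> 1 \<le> ordK m Q x"

lemma V1_V0: "V1 x \<Longrightarrow> V0 x" unfolding V0_def V1_def by auto

lemma V_add: assumes "x \<in> QF m" "y \<in> QF m"
  shows "V0 x \<Longrightarrow> V0 y \<Longrightarrow> V0 (x + y)" and "V1 x \<Longrightarrow> V1 y \<Longrightarrow> V1 (x + y)"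
  using ordK_add[OF assms(1) _ assms(2)] unfolding V0_def V1_def
  by (cases "x = 0"; cases "y = 0"; cases "x + y = 0"; force)+

lemma V_mult: assumes "x \<in> QF m" "y \<in> QF m"
  shows "V0 x \<Longrightarrow> V0 y \<Longrightarrow> V0 (x * y)" and "V1 x \<Longrightarrow> V0 y \<Longrightarrow> V1 (x * y)"
  using ordK_mult[OF assms(1) _ assms(2)] unfolding V0_def V1_def
  by (cases "x = 0"; cases "y = 0"; force)+

lemma V0_OK: "x \<in> OK m \<Longrightarrow> V0 x" unfolding V0_def by (cases "x = 0") (auto simp: ordK_OK)

lemma V1_Q: "x \<in> Q \<Longrightarrow> V1 x" unfolding V1_def using ordK_OK ord_Q Q_sub by fastforce

lemma V_pow: assumes "x \<in> QF m"
  shows "V0 x \<Longrightarrow> V0 (x ^ n)" and "V1 x \<Longrightarrow> n \<ge> 1 \<Longrightarrow> V1 (x ^ n)"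
proof -
  assume v: "V0 x"
  show "V0 (x ^ n)"
  proof (cases "x = 0")
    case True then show ?thesis unfolding V0_def using ordK_OK[of 1] ordO_1 by (cases n) auto
  next
    case False then show ?thesis using v ordK_pow[OF assms False] unfolding V0_def by auto
  qed
next
  assume v: "V1 x" "n \<ge> 1"
  show "V1 (x ^ n)"
  proof (cases "x = 0")
    case True then show ?thesis using v unfolding V1_def by auto
  next
    case False
    then have "1 \<le> ordK m Q x" using v unfolding V1_def by auto
    moreover have "int n \<ge> 1" using v by simp
    ultimately have "1 \<le> int n * ordK m Q x" by (metis mult_le_cancel_right1 mult.commute order_trans zero_le_one
       mult_left_mono of_nat_0_le_iff mult_1_right)
    then show ?thesis using ordK_pow[OF assms False] unfolding V1_def by auto
  qed
qed

lemma V_minus: assumes "x \<in> QF m" shows "V1 x \<Longrightarrow> V1 (- x)"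
proof -
  assume v: "V1 x"
  have m1: "(-1::complex) \<in> OK m" "(-1::complex) \<noteq> 0" using OK_int[of "-1"] by auto
  have "V0 (-1)" using V0_OK[OF m1(1)] .
  then have "V1 (x * (-1))" using V_mult(2)[OF assms QF_int[of "-1", simplified] v] by simp
  then show ?thesis by simp
qed

lemma V1_diff: "x \<in> QF m \<Longrightarrow> y \<in> QF m \<Longrightarrow> V1 x \<Longrightarrow> V1 y \<Longrightarrow> V1 (x - y)"
  using V_add(2)[of x "-y"] V_minus[of y] QF_minus by simp

lemma V_div_unit: assumes "x \<in> QF m" "u \<in> QF m" "u \<noteq> 0" "ordK m Q u = 0"
  shows "V1 x \<Longrightarrow> V1 (x / u)" and "V0 x \<Longrightarrow> V0 (x / u)"
proof -
  have "ordK m Q (inverse u) = 0" using ordK_inv[OF assms(2,3)] assms(4) by simp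
  then have "V0 (inverse u)" unfolding V0_def by simp
  then show "V1 x \<Longrightarrow> V1 (x / u)" "V0 x \<Longrightarrow> V0 (x / u)"
    using V_mult[OF assms(1) QF_inverse[OF assms(2)]] by (simp_all add: divide_inverse)
qed

lemma V1_diff_pow: assumes "a \<in> QF m" "b \<in> QF m" "V0 a" "V0 b" "V1 (a - b)"
  shows "V1 (a ^ n - b ^ n)"
proof (induction n)
  case 0 then show ?case unfolding V1_def by simp
next
  case (Suc n)
  have "a ^ Suc n - b ^ Suc n = (a ^ n - b ^ n) * a + (a - b) * b ^ n" by (simp add: algebra_simps)
  moreover have "V1 ((a ^ n - b ^ n) * a)"
    by (rule V_mult(2)[OF QF_diff[OF QF_power[OF assms(1)] QF_power[OF assms(2)]] assms(1) Suc assms(3)])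
  moreover have "V1 ((a - b) * b ^ n)"
    by (rule V_mult(2)[OF QF_diff[OF assms(1,2)] QF_power[OF assms(2)] assms(5) V_pow(1)[OF assms(2,4)]])
  ultimately show ?case
    using V_add(2) QF_mult QF_diff QF_power assms(1,2) by metis
qed

lemma Q_powdiff: assumes "x \<in> OK m" "y \<in> OK m" "x - y \<in> Q" shows "x ^ n - y ^ n \<in> Q"
proof (induction n)
  case 0 then show ?case using Q_int[of 0] by simp
next
  case (Suc n)
  have "x ^ Suc n - y ^ Suc n = (x ^ n - y ^ n) * x + (x - y) * y ^ n" by (simp add: algebra_simps)
  then show ?case using Q_add Q_rmul Suc assms OK_power by metis
qed

lemma fermat_Q: assumes x: "x \<in> OK m" "x \<notin> Q" shows "x ^ (q - 1) - 1 \<in> Q"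
proof -
  obtain c where c: "x - of_int c \<in> Q" using residue[OF x(1)] by blast
  have ncQ: "\<not> int q dvd c"
  proof
    assume "int q dvd c"
    then have "of_int c \<in> Q" using Q_int by blast
    then have "(x - of_int c) + of_int c \<in> Q" using Q_add c by blast
    then show False using x by simp
  qed
  define a where "a = nat (c mod int q)"
  have ac: "int a = c mod int q" unfolding a_def using q_gt2 by simp
  have "\<not> q dvd a"
  proof
    assume "q dvd a"
    then have "int q dvd c mod int q" using ac by (metis int_dvd_int_iff)
    then show False using ncQ by (simp add: dvd_mod_iff)
  qed
  then have "[a ^ (q - 1) = 1] (mod q)" using fermat_theorem qp by blast
  then have "[int a ^ (q - 1) = 1] (mod int q)" by (metis cong_int_iff of_nat_1 of_nat_power)
  moreover have "[c = int a] (mod int q)" unfolding ac cong_def by simp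
  then have "[c ^ (q - 1) = int a ^ (q - 1)] (mod int q)" by (rule cong_pow)
  ultimately have "[c ^ (q - 1) = 1] (mod int q)" using cong_trans by blast
  then have "int q dvd c ^ (q - 1) - 1" by (simp add: cong_iff_dvd_diff)
  then have "of_int (c ^ (q - 1) - 1) \<in> Q" using Q_int by blast
  moreover have "x ^ (q - 1) - (of_int c) ^ (q - 1) \<in> Q" using Q_powdiff[OF x(1) OK_int c] .
  ultimately have "(x ^ (q - 1) - (of_int c) ^ (q - 1)) + of_int (c ^ (q - 1) - 1) \<in> Q" using Q_add by blast
  then show ?thesis by simp
qed

lemma norm_unit: assumes x: "x \<in> OK m" "x \<noteq> 0"
  shows "x * t ^ ordO m Q x / of_nat q ^ ordO m Q x \<in> OK m - Q"
proof -
  define a where "a = ordO m Q x"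
  define x1 where "x1 = x * t^a / of_nat q^a"
  have "a \<le> ordO m Q x" unfolding a_def by simp
  then have x1: "x1 \<in> OK m" unfolding x1_def using ord_char[OF x] by blast
  have x1Q: "x1 \<notin> Q"
  proof
    assume "x1 \<in> Q"
    then have "x1 * t / of_nat q \<in> OK m" by (rule key1)
    moreover have "x1 * t / of_nat q = x * t^(Suc a) / of_nat q^(Suc a)" unfolding x1_def by (simp add: field_simps)
    ultimately have "Suc a \<le> a" using ord_char[OF x, of "Suc a"] a_def by simp
    then show False by simp
  qed
  show ?thesis using x1 x1Q unfolding x1_def a_def by simp
qed

lemma pow_notQ: "x \<in> OK m \<Longrightarrow> x \<notin> Q \<Longrightarrow> x ^ n \<notin> Q"
proof (induction n)
  case 0 then show ?case using Q_not1 by simp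
next
  case (Suc n) then show ?case using Q_prime[OF Suc.prems(1) OK_power[OF Suc.prems(1)]] by auto
qed

lemma unit_fermat: assumes "x \<in> QF m" "x \<noteq> 0" "ordK m Q x = 0"
  shows "V1 (x ^ (q - 1) - 1)"
proof -
  obtain a b where ab: "a \<in> OK m - {0}" "b \<in> OK m - {0}" "x = a / b" using ordK_ex assms by blast
  have "int (ordO m Q a) - int (ordO m Q b) = 0" using ordK_eq ab assms(3) by auto
  then have eq: "ordO m Q a = ordO m Q b" by simp
  define e where "e = ordO m Q a"
  define a1 where "a1 = a * t^e / of_nat q^e"
  define b1 where "b1 = b * t^e / of_nat q^e"
  have a1: "a1 \<in> OK m" "a1 \<notin> Q" using norm_unit[of a] ab unfolding a1_def e_def by auto
  have b1: "b1 \<in> OK m" "b1 \<notin> Q" using norm_unit[of b] ab eq unfolding b1_def e_def by auto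
  have tnz: "t \<noteq> 0" using t_notQ Q_int[of 0] by auto
  have x1: "x = a1 / b1" using ab tnz q_gt2 unfolding a1_def b1_def by (simp add: field_simps)
  have b1nz: "b1 \<noteq> 0" using b1 Q_int[of 0] by auto
  have "x ^ (q - 1) - 1 = ((a1 ^ (q - 1) - 1) - (b1 ^ (q - 1) - 1)) / b1 ^ (q - 1)"
    using b1nz unfolding x1 by (simp add: field_simps power_divide)
  moreover have "V1 ((a1 ^ (q - 1) - 1) - (b1 ^ (q - 1) - 1))"
    using V1_Q Q_diff fermat_Q a1 b1 by blast
  moreover have "b1 ^ (q - 1) \<in> OK m" "b1 ^ (q - 1) \<noteq> 0" "b1 ^ (q - 1) \<notin> Q"
  proof -
    show "b1 ^ (q - 1) \<in> OK m" using OK_power b1 by blast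
    show "b1 ^ (q - 1) \<noteq> 0" using b1nz by simp
    show "b1 ^ (q - 1) \<notin> Q" using pow_notQ b1 by blast
  qed
  moreover have "ordK m Q (b1 ^ (q - 1)) = 0"
    using ordK_OK[OF calculation(3,4)] ord_Q[OF calculation(3,4)] calculation(5) by simp
  ultimately show ?thesis
    using V_div_unit(1) QF_diff QF_power OK_QF a1(1) b1(1) QF_int[of 1] by (metis of_int_1)
qed

end

lemma int_s_nz: assumes "n > 0" "m > 0" shows "of_int a + of_nat n * sqrt_neg m \<noteq> 0"
proof
  assume "of_int a + of_nat n * sqrt_neg m = 0"
  then have "Im (of_int a + of_nat n * sqrt_neg m) = 0" by simp
  then have "real n * sqrt (real m) = 0" unfolding sqrt_neg_def by simp
  then show False using assms by simp
qed

context qfS begin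

lemma main_S:
  fixes v n l k \<zeta> :: nat and \<sigma> :: int and eps \<eta> :: complex
  assumes eps: "eps \<in> QF m" "eps \<noteq> 0" "ordK m Q eps = 0"
    and eta: "\<eta> \<in> QF m" and eq: "of_nat v * of_int \<sigma> ^ l + of_nat n * sqrt_neg m = eps * \<eta> ^ l"
    and l: "l > 0" and n: "n > 0" and qk: "q - 1 = 2 * k * l" and k: "k > 0"
    and zs: "int q dvd \<sigma> ^ l - int \<zeta>"
  shows "V1 (((of_nat v * of_nat \<zeta> + of_nat n * sqrt_neg m) / eps) ^ (2 * k) - 0)
       \<or> V1 (((of_nat v * of_nat \<zeta> + of_nat n * sqrt_neg m) / eps) ^ (2 * k) - 1)"
proof -
  define A where "A = of_nat v * of_int \<sigma> ^ l + of_nat n * sqrt_neg m"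
  define B where "B = of_nat v * of_nat \<zeta> + of_nat n * sqrt_neg m"
  have AO: "A \<in> OK m" unfolding A_def using OK_add OK_mult OK_power by simp
  have BO: "B \<in> OK m" unfolding A_def B_def using OK_add OK_mult OK_power by simp
  have A0: "A \<noteq> 0" unfolding A_def using int_s_nz[OF n m_pos, of "int v * \<sigma> ^ l"] by simp
  have eta0: "\<eta> \<noteq> 0" using A0 eq l unfolding A_def by auto
  have etal: "\<eta> ^ l \<in> QF m" "\<eta> ^ l \<noteq> 0" using QF_power[OF eta] eta0 by auto
  have "ordK m Q A = ordK m Q eps + ordK m Q (\<eta> ^ l)" unfolding A_def eq using ordK_mult eps etal by simp
  then have "int (ordO m Q A) = int l * ordK m Q \<eta>" using ordK_OK[OF AO A0] eps(3) ordK_pow[OF eta eta0] by simp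
  then have eta_ge: "0 \<le> ordK m Q \<eta>" using l by (metis of_nat_0_le_iff of_nat_0_less_iff zero_le_mult_iff not_le)
  define w0 where "w0 = A / eps"
  define w where "w = B / eps"
  have w0e: "w0 = \<eta> ^ l" unfolding w0_def A_def eq using eps by simp
  have QFs: "w0 \<in> QF m" "w \<in> QF m" unfolding w0_def w_def using QF_divide OK_QF AO BO eps by auto
  have "w - w0 = of_int (int v * (int \<zeta> - \<sigma> ^ l)) / eps" unfolding w_def w0_def A_def B_def
    using eps(2) by (simp add: field_simps)
  moreover have "of_int (int v * (int \<zeta> - \<sigma> ^ l)) \<in> Q"
    using Q_int zs by (metis dvd_mult dvd_minus_iff minus_diff_eq)
  ultimately have d1: "V1 (w - w0)" using V_div_unit(1)[OF QF_int eps] V1_Q by metis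
  show ?thesis
  proof (cases "ordK m Q \<eta> \<ge> 1")
    case True
    then have "V1 \<eta>" unfolding V1_def by simp
    then have "V1 w0" unfolding w0e using V_pow(2)[OF eta] l by simp
    then have "V1 (w0 + (w - w0))" using V_add(2) QFs QF_diff d1 by blast
    then have "V1 w" by simp
    then have "V1 (w ^ (2 * k))" using V_pow(2)[OF QFs(2)] k by simp
    then show ?thesis unfolding w_def B_def by simp
  next
    case False
    then have e0: "ordK m Q \<eta> = 0" using eta_ge by simp
    have "V0 \<eta>" unfolding V0_def using e0 by simp
    then have v0: "V0 w0" unfolding w0e using V_pow(1)[OF eta] by simp
    have "V0 (w0 + (w - w0))" using V_add(1) QFs QF_diff d1 v0 V1_V0 by blast
    then have v: "V0 w" by simp
    have p1: "V1 (w ^ (2*k) - w0 ^ (2*k))" by (rule V1_diff_pow[OF QFs(2,1) v v0]) (use d1 V1_diff in \<open>simp add: minus_diff_eq\<close>)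
    have "w0 ^ (2*k) = \<eta> ^ (q - 1)" unfolding w0e qk by (simp add: power_mult[symmetric] mult.commute mult.left_commute)
    then have p2: "V1 (w0 ^ (2*k) - 1)" using unit_fermat[OF eta eta0 e0] by simp
    have "V1 ((w ^ (2*k) - w0 ^ (2*k)) + (w0 ^ (2*k) - 1))"
      by (rule V_add(2)[OF _ _ p1 p2]) (use QFs QF_diff QF_power QF_int[of 1] in auto)
    then show ?thesis unfolding w_def B_def by simp
  qed
qed

end

context qfQ begin

lemma main_Q:
  fixes v n l k \<zeta> :: nat and \<sigma> :: int and eps \<eta> :: complex
  assumes nqm: "\<not> q dvd m" and ex: "\<exists>r::int. int q dvd r^2 + int m"
    and eps: "eps \<in> QF m" "eps \<noteq> 0" "ordK m Q eps = 0"
    and eta: "\<eta> \<in> QF m" and eq: "of_nat v * of_int \<sigma> ^ l + of_nat n * sqrt_neg m = eps * \<eta> ^ l"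
    and l: "l > 0" and n: "n > 0" and qk: "q - 1 = 2 * k * l" and k: "k > 0"
    and zs: "int q dvd \<sigma> ^ l - int \<zeta>"
  shows "congP m Q (((of_nat v * of_nat \<zeta> + of_nat n * sqrt_neg m) / eps) ^ (2 * k)) 0
       \<or> congP m Q (((of_nat v * of_nat \<zeta> + of_nat n * sqrt_neg m) / eps) ^ (2 * k)) 1"
proof -
  obtain r where r: "sqrt_neg m - of_int r \<in> Q" "int q dvd r^2 + int m" "\<not> int q ^ 2 dvd r^2 + int m" "\<not> int q dvd r"
    using split_exists[OF nqm ex] by blast
  interpret S: qfS m Q q r using qfQ_axioms r by (simp add: qfS_def qfS_axioms_def)
  have "S.V1 (((of_nat v * of_nat \<zeta> + of_nat n * sqrt_neg m) / eps) ^ (2 * k) - 0)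
       \<or> S.V1 (((of_nat v * of_nat \<zeta> + of_nat n * sqrt_neg m) / eps) ^ (2 * k) - 1)"
    by (rule S.main_S[OF eps eta eq l n qk k zs])
  then show ?thesis unfolding S.V1_def congP_def by auto
qed

end

theorem lemma9p2:
  fixes l R S T v u m n q k :: nat and eps :: complex and q1 q2 :: "complex set"
  assumes "prime l"
    and "R > 0" "S > 0" "T > 0"
    and "coprime R S" "coprime R T" "coprime S T"
    and "v > 0" "S * Sprime S = v ^ 2"
    and "u = R * Sprime S"
    and "squarefree m" "m > 0" "n > 0" "T * Sprime S = m * n ^ 2"
    and "in_E l m n u eps"
    and "k > 0" "q = 2 * k * l + 1" "prime q"
    and "prime_ideal_OK m q1" "prime_ideal_OK m q2" "q1 \<noteq> q2"
    and "genideal (OK_ring m) {complex_of_nat q} = ideal_prod (OK_ring m) q1 q2"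
    and "ordK m q1 eps = 0" "ordK m q2 eps = 0"
    and "Cset l q k m n v eps q1 q2 = {}"
  shows "\<not> (\<exists>(\<sigma>::int) \<eta>. \<eta> \<in> QF m \<and>
            complex_of_nat v * complex_of_int \<sigma> ^ l + complex_of_nat n * sqrt_neg m = eps * \<eta> ^ l)"
proof
  assume "\<exists>(\<sigma>::int) \<eta>. \<eta> \<in> QF m \<and>
            complex_of_nat v * complex_of_int \<sigma> ^ l + complex_of_nat n * sqrt_neg m = eps * \<eta> ^ l"
  then obtain \<sigma> :: int and \<eta> where eta: "\<eta> \<in> QF m"
    and eq: "complex_of_nat v * complex_of_int \<sigma> ^ l + complex_of_nat n * sqrt_neg m = eps * \<eta> ^ l" by blast
  have p1: "primeideal q1 (OK_ring m)" using assms(19) unfolding prime_ideal_OK_def by blast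
  have p2: "primeideal q2 (OK_ring m)" using assms(20) unfolding prime_ideal_OK_def by blast
  have cr: "cring (OK_ring m)" using p1 unfolding primeideal_def by blast
  interpret qf m using assms(11,12) cr by (simp add: qf_def)
  have i1: "ideal q1 (OK_ring m)" using p1 unfolding primeideal_def by blast
  have i2: "ideal q2 (OK_ring m)" using p2 unfolding primeideal_def by blast
  have "of_nat q \<in> genideal (OK_ring m) {of_nat q}" using ring.genideal_self'[OF rng, of "of_nat q"] by simp
  then have "of_nat q \<in> q1 \<inter> q2" using assms(22) ring.ideal_prod_inter[OF rng i1 i2] by auto
  then have qq1: "of_nat q \<in> q1" and qq2: "of_nat q \<in> q2" by auto
  have oq: "odd q" using assms(17) by simp
  interpret A: qfQ m q1 q using qf_axioms p1 assms(18) oq qq1 by (simp add: qfQ_def qfQ_axioms_def)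
  interpret B: qfQ m q2 q using qf_axioms p2 assms(18) oq qq2 by (simp add: qfQ_def qfQ_axioms_def)
  have nqm: "\<not> q dvd m"
  proof
    assume qm: "q dvd m"
    have "\<forall>x. x \<in> q1 \<longleftrightarrow> x \<in> q2"
    proof
      fix x
      show "x \<in> q1 \<longleftrightarrow> x \<in> q2"
      proof (cases "x \<in> OK m")
        case True
        obtain a b where "2 * x = of_int a + of_int b * sqrt_neg m" using OK_rep[OF True] by blast
        then show ?thesis using A.ramified[OF qm True] B.ramified[OF qm True] by simp
      next
        case False then show ?thesis using A.Q_sub B.Q_sub by blast
      qed
    qed
    then show False using assms(21) by blast
  qed
  have ex: "\<exists>r::int. int q dvd r^2 + int m"
  proof (rule ccontr)
    assume "\<not> (\<exists>r::int. int q dvd r^2 + int m)"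
    then have nr: "\<forall>r::int. \<not> int q dvd r^2 + int m" by blast
    have "\<forall>x. x \<in> q1 \<longleftrightarrow> x \<in> q2"
    proof
      fix x
      show "x \<in> q1 \<longleftrightarrow> x \<in> q2"
      proof (cases "x \<in> OK m")
        case True
        then show ?thesis using A.inert[OF nr True] B.inert[OF nr True] by simp
      next
        case False then show ?thesis using A.Q_sub B.Q_sub by blast
      qed
    qed
    then show False using assms(21) by blast
  qed
  have epsE: "eps \<in> QF m" "eps \<noteq> 0" using assms(15) unfolding in_E_def by auto
  have l0: "l > 0" using assms(1) prime_gt_0_nat by blast
  have qk: "q - 1 = 2 * k * l" using assms(17) by simp
  define \<zeta> where "\<zeta> = (nat (\<sigma> mod int q)) ^ l mod q"
  have qpos: "q > 0" using assms(18) prime_gt_0_nat by blast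
  have zchi: "\<zeta> \<in> chi l q" unfolding chi_def \<zeta>_def
  proof (intro CollectI exI conjI)
    show "nat (\<sigma> mod int q) < q" using qpos by (simp add: nat_less_iff)
  qed simp
  have "int \<zeta> = (\<sigma> mod int q) ^ l mod int q" unfolding \<zeta>_def using qpos
    by (simp add: of_nat_mod of_nat_power)
  also have "\<dots> = \<sigma> ^ l mod int q" by (simp add: power_mod)
  finally have zs: "int q dvd \<sigma> ^ l - int \<zeta>" by (simp add: mod_eq_dvd_iff)
  have c1: "congP m q1 (((of_nat v * of_nat \<zeta> + of_nat n * sqrt_neg m) / eps) ^ (2 * k)) 0
       \<or> congP m q1 (((of_nat v * of_nat \<zeta> + of_nat n * sqrt_neg m) / eps) ^ (2 * k)) 1"
    by (rule A.main_Q[OF nqm ex epsE assms(23) eta eq l0 assms(13) qk assms(16) zs])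
  have c2: "congP m q2 (((of_nat v * of_nat \<zeta> + of_nat n * sqrt_neg m) / eps) ^ (2 * k)) 0
       \<or> congP m q2 (((of_nat v * of_nat \<zeta> + of_nat n * sqrt_neg m) / eps) ^ (2 * k)) 1"
    by (rule B.main_Q[OF nqm ex epsE assms(24) eta eq l0 assms(13) qk assms(16) zs])
  have "\<zeta> \<in> Cset l q k m n v eps q1 q2" unfolding Cset_def using zchi c1 c2 by auto
  then show False using assms(25) by simp
qed

end
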